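(* Let $c>0$, $\gamma>0$, $T>0$, $n\in\{1,2,3,\dots\}$, and let $\{\xi_{tT}\}_{0\le t\le T}$ be a stable-1/2 random bridge with activity parameter $c$ whose terminal law has density $f_{GIG}(z;n-\tfrac12,cT,\gamma)$. Let $\{\mathcal F^\xi_t\}$ be its natural filtration. Then for $0\le t<T$ the best-estimate ultimate loss $U_{tT}=\mathbb{E}[\xi_{TT}\mid\mathcal F^\xi_t]$ is $$U_{tT}=\frac{\sum_{k=0}^{n+1}\binom{n+1}{k}m^{(n+1-k)}_{T-t}\, \xi_{tT}^k}{\sum_{k=0}^{n}\binom{n}{k}m^{(n-k)}_{T-t}\, \xi_{tT}^k}.$$
   Context: Let $f_t(x)=\mathbf 1_{\{x>0\}}\frac{ct}{\sqrt{2\pi}x^{3/2}}\exp\left(-\frac{c^2t^2}{2x}\right)$ be the density of $S_t$ for a stable-1/2 subordinator $\{S_t\}$ with activity parameter $c>0$ (a Lévy process with $\mathbb{E}[e^{-\lambda S_t}]=\exp(-ct\sqrt{\lambda}/\sqrt2)$). A process $\{\xi_{tT}\}_{0\le t\le T}$ is a stable-1/2 random bridge with terminal law $\nu$ if $\xi_{TT}$ has law $\nu$ and, for $\nu$-a.e. $z$, conditionally on $\xi_{TT}=z$ its finite-dimensional distributions on $(0,T)$ coincide with those of $\{S_t\}$ conditioned on $S_T=z$. The generalized inverse-Gaussian density is $f_{GIG}(x;\lambda,\delta,\gamma)=\mathbf 1_{\{x>0\}}(\gamma/\delta)^{\lambda}\frac{1}{2K_\lambda(\gamma\delta)}x^{\lambda-1}\exp\left(-\tfrac12(\delta^2x^{-1}+\gamma^2x)\right)$,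 with $K_\lambda$ the modified Bessel function of the third kind. Let $q_t(x)=f_{GIG}(x;-\tfrac12,ct,\gamma)=\mathbf 1_{\{x>0\}}\frac{ct}{\sqrt{2\pi}}x^{-3/2}\exp\left(-\frac{\gamma^2}{2x}\left(x-\frac{c}{\gamma}t\right)^2\right)$ be the inverse-Gaussian density, and for $k\ge0$ let $m^{(k)}_t=\int_0^\infty x^k q_t(x)\,dx$ be its $k$th moment (so $m^{(0)}_t=1$, $m^{(1)}_t=ct/\gamma$). *)

theory Defs
  imports "HOL-Probability.Probability"
begin

definition stable_half_density :: "real \<Rightarrow> real \<Rightarrow> real \<Rightarrow> real" where
  "stable_half_density c t x =
     (if x > 0 then c * t / (sqrt (2 * pi) * x powr (3/2)) * exp (- (c^2 * t^2) / (2 * x)) else 0)"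

definition besselK :: "real \<Rightarrow> real \<Rightarrow> real" where
  "besselK lam z = 1/2 * (LBINT u:{0<..}. u powr (lam - 1) * exp (- z / 2 * (u + 1 / u)))"

definition f_GIG :: "real \<Rightarrow> real \<Rightarrow> real \<Rightarrow> real \<Rightarrow> real" where
  "f_GIG lam \<delta> \<gamma> x =
     (if x > 0 then (\<gamma> / \<delta>) powr lam * (1 / (2 * besselK lam (\<gamma> * \<delta>))) * x powr (lam - 1)
                   * exp (- (1/2) * (\<delta>^2 / x + \<gamma>^2 * x))
      else 0)"

definition q_IG :: "real \<Rightarrow> real \<Rightarrow> real \<Rightarrow> real \<Rightarrow> real" where
  "q_IG c \<gamma> t x = f_GIG (-1/2) (c * t) \<gamma> x"

definition IG_moment :: "real \<Rightarrow> real \<Rightarrow> nat \<Rightarrow> real \<Rightarrow> real" where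
  "IG_moment c \<gamma> k t = (LBINT x:{0<..}. x ^ k * q_IG c \<gamma> t x)"

text \<open>Stable-1/2 random bridge on [0,T] with activity parameter c whose terminal law has
  Lebesgue density p.  Each xi t is a random variable, xi 0 = 0 a.s., and for every m and every
  partition 0 = s_0 < s_1 < ... < s_m < s_(m+1) = T, the joint law of
  (xi_(s_1), ..., xi_(s_m), xi_T) is p(z) dz times the law of (S_(s_1),...,S_(s_m)) conditioned
  on S_T = z, i.e. it has density
  prod_(i=1..m+1) f_(s_i - s_(i-1))(x_i - x_(i-1)) / f_T(x_(m+1)) * p(x_(m+1))   (x_0 = 0).
  For m = 0 this says that xi_T has density p.\<close>
definition stable_half_bridge ::
    "'a measure \<Rightarrow> real \<Rightarrow> real \<Rightarrow> (real \<Rightarrow> real) \<Rightarrow> (real \<Rightarrow> 'a \<Rightarrow> real) \<Rightarrow> bool" where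
  "stable_half_bridge M c T p \<xi> \<longleftrightarrow>
     (\<forall>t\<in>{0..T}. \<xi> t \<in> borel_measurable M) \<and>
     (AE \<omega> in M. \<xi> 0 \<omega> = 0) \<and>
     (\<forall>(m::nat) (s::nat \<Rightarrow> real).
        s 0 = 0 \<and> s (m + 1) = T \<and> (\<forall>i\<in>{1..m+1}. s (i - 1) < s i) \<longrightarrow>
        distr M (PiM {1..m+1} (\<lambda>_. lborel)) (\<lambda>\<omega>. \<lambda>i\<in>{1..m+1}. \<xi> (s i) \<omega>) =
        density (PiM {1..m+1} (\<lambda>_. lborel))
          (\<lambda>x. ennreal ((\<Prod>i\<in>{1..m+1}.
                 stable_half_density c (s i - s (i - 1))
                   (x i - (if i = 1 then 0 else x (i - 1))))
               / stable_half_density c T (x (m + 1)) * p (x (m + 1)))))"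

definition natural_filtration :: "'a measure \<Rightarrow> (real \<Rightarrow> 'a \<Rightarrow> real) \<Rightarrow> real \<Rightarrow> 'a measure" where
  "natural_filtration M \<xi> t =
     sigma (space M) {\<xi> s -` A \<inter> space M | s A. s \<in> {0..t} \<and> A \<in> sets borel}"

end

theory Submission
  imports Defs
begin


lemma pow_bound:
  fixes a w :: real assumes a: "a > 0" and w: "w > 0"
  shows "w powr (-3/2) * exp (- a / w) \<le> 1 + 4 / a^2"
proof -
  define v where "v = 1 / w"
  have v: "v > 0" using w by (simp add: v_def)
  have e1: "w powr (-3/2) = v powr (3/2)" using w by (simp add: v_def powr_minus_divide powr_divide)
  have e2: "exp (- a / w) = exp (- (a * v))" by (simp add: v_def)
  have h1: "v powr (3/2) \<le> 1 + v^2"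
  proof (cases "v \<le> 1")
    case True
    have "v powr (3/2) \<le> 1 powr (3/2)" using v True by (intro powr_mono2) auto
    hence "v powr (3/2) \<le> 1" by simp
    moreover have "0 \<le> v^2" by simp
    ultimately show ?thesis by linarith
  next
    case False
    have "v powr (3/2) \<le> v powr 2" using False by (intro powr_mono) auto
    also have "\<dots> = v^2" using v by (simp add: powr_realpow)
    finally show ?thesis by simp
  qed
  have hexp: "exp (a * v) \<ge> (a * v/2)^2"
  proof -
    have "exp (a * v/2) \<ge> 1 + a * v/2" by (rule exp_ge_add_one_self)
    hence "exp (a * v/2) \<ge> a * v/2" by linarith
    hence "(exp (a * v/2))^2 \<ge> (a * v/2)^2" using a v by (intro power_mono) auto
    also have "(exp (a * v/2))^2 = exp (a * v)" by (simp add: power2_eq_square exp_add[symmetric])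
    finally show ?thesis .
  qed
  have h2: "v^2 * exp (- (a * v)) \<le> 4 / a^2"
  proof -
    have "v^2 * exp (- (a * v)) = v^2 / exp (a * v)" by (simp add: exp_minus field_simps)
    also have "\<dots> \<le> v^2 / (a * v/2)^2" using a v hexp by (intro divide_left_mono) auto
    also have "\<dots> = 4 / a^2" using a v by (simp add: field_simps power2_eq_square)
    finally show ?thesis .
  qed
  have "w powr (-3/2) * exp (- a / w) = v powr (3/2) * exp (- (a * v))" using e1 e2 by simp
  also have "\<dots> \<le> (1 + v^2) * exp (- (a * v))" using h1 by (intro mult_right_mono) auto
  also have "\<dots> = exp (- (a * v)) + v^2 * exp (- (a * v))" by (simp add: algebra_simps)
  also have "\<dots> \<le> 1 + 4/a^2" using h2 a v by (intro add_mono) auto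
  finally show ?thesis .
qed

lemma integrable_pow_exp:
  fixes b :: real assumes b: "b > 0"
  shows "integrable lborel (\<lambda>w. indicator {0<..} w * (w ^ i * exp (- b * w)))"
proof -
  have "integrable lborel (\<lambda>x. erlang_density 0 b x * x ^ i)"
    using nn_integral_erlang_ith_moment[OF b, of 0 i] b
    by (intro integrableI_nonneg) (auto simp: erlang_density_def)
  hence "integrable lborel (\<lambda>x. (1/b) * (erlang_density 0 b x * x ^ i))" by simp
  then show ?thesis
    by (rule Bochner_Integration.integrable_bound) (use b in \<open>auto simp: erlang_density_def indicator_def\<close>)
qed

lemma integrable_main:
  fixes A B :: real assumes A: "A > 0" and B: "B > 0"
  shows "integrable lborel (\<lambda>w. indicator {0<..} w * (w ^ i * (w powr (-3/2) * exp (- (A / w + B * w)))))"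
proof -
  have "integrable lborel (\<lambda>w. (1 + 4/A^2) * (indicator {0<..} w * (w ^ i * exp (- B * w))))"
    using integrable_pow_exp[OF B] by simp
  then show ?thesis
  proof (rule Bochner_Integration.integrable_bound)
    show "(\<lambda>w. indicator {0<..} w * (w ^ i * (w powr (-3/2) * exp (- (A / w + B * w))))) \<in> borel_measurable lborel"
      by measurable
    show "AE x in lborel. norm (indicator {0<..} x * (x ^ i * (x powr (-3/2) * exp (- (A / x + B * x)))))
        \<le> norm ((1 + 4/A^2) * (indicator {0<..} x * (x ^ i * exp (- B * x))))"
    proof (rule AE_I2)
      fix x :: real
      show "norm (indicator {0<..} x * (x ^ i * (x powr (-3/2) * exp (- (A / x + B * x)))))
        \<le> norm ((1 + 4/A^2) * (indicator {0<..} x * (x ^ i * exp (- B * x))))"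
      proof (cases "x > 0")
        case True
        have pb: "x powr (-3/2) * exp (- A / x) \<le> 1 + 4/A^2" by (rule pow_bound[OF A True])
        have "x powr (-3/2) * exp (- (A / x + B * x)) = (x powr (-3/2) * exp (- A / x)) * exp (- B * x)"
          by (simp add: exp_add[symmetric] algebra_simps)
        also have "\<dots> \<le> (1 + 4/A^2) * exp (- B * x)" using pb by (intro mult_right_mono) auto
        finally have "x ^ i * (x powr (-3/2) * exp (- (A / x + B * x))) \<le> x^i * ((1 + 4/A^2) * exp (- B * x))"
          using True by (intro mult_left_mono) auto
        then show ?thesis using True by (simp add: abs_mult algebra_simps)
      qed simp
    qed
  qed
qed

lemma integral_pos_lborel:
  fixes f :: "real \<Rightarrow> real"
  assumes int: "integrable lborel f" and nn: "\<And>x. f x \<ge> 0" and pos: "\<And>x. x > 0 \<Longrightarrow> f x > 0"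
  shows "integral\<^sup>L lborel f > 0"
proof -
  have ge: "integral\<^sup>L lborel f \<ge> 0" using nn by (intro integral_nonneg_AE) auto
  have "integral\<^sup>L lborel f \<noteq> 0"
  proof
    assume "integral\<^sup>L lborel f = 0"
    hence "AE x in lborel. f x = 0" using integral_nonneg_eq_0_iff_AE[OF int] nn by auto
    then obtain N where N: "{x \<in> space lborel. \<not> f x = 0} \<subseteq> N" "emeasure lborel N = 0" "N \<in> sets lborel"
      by (rule AE_E)
    have "{0<..<1::real} \<subseteq> N" using N(1) pos by (force dest: pos)
    hence "emeasure lborel {0<..<1::real} \<le> emeasure lborel N"
      using N(3) by (intro emeasure_mono) auto
    then show False using N(2) by simp
  qed
  then show ?thesis using ge by linarith
qed



lemma besselK_half_pos:
  fixes z :: real assumes z: "z > 0"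
  shows "besselK (-1/2) z > 0"
proof -
  have eq: "(\<lambda>u. indicator {0<..} u *\<^sub>R (u powr (-1/2 - 1) * exp (- z / 2 * (u + 1 / u))))
      = (\<lambda>u. indicator {0<..} u * (u ^ 0 * (u powr (-3/2) * exp (- ((z/2) / u + (z/2) * u)))))"
    by (rule ext) (simp add: algebra_simps)
  have int: "integrable lborel (\<lambda>u. indicator {0<..} u *\<^sub>R (u powr (-1/2 - 1) * exp (- z / 2 * (u + 1 / u))))"
    unfolding eq using z by (intro integrable_main) auto
  have "integral\<^sup>L lborel (\<lambda>u. indicator {0<..} u *\<^sub>R (u powr (-1/2 - 1) * exp (- z / 2 * (u + 1 / u)))) > 0"
    by (rule integral_pos_lborel[OF int]) (auto simp: indicator_def)
  then show ?thesis unfolding besselK_def set_lebesgue_integral_def by simp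
qed

lemma besselK_nonneg: "besselK lam z \<ge> 0"
  unfolding besselK_def set_lebesgue_integral_def
  by (auto intro!: integral_nonneg_AE simp: indicator_def)

lemma f_GIG_nonneg: "\<gamma> \<ge> 0 \<Longrightarrow> \<delta> > 0 \<Longrightarrow> f_GIG lam \<delta> \<gamma> x \<ge> 0"
  unfolding f_GIG_def using besselK_nonneg[of lam "\<gamma> * \<delta>"] by auto

lemma stable_half_density_nonneg: "c \<ge> 0 \<Longrightarrow> t \<ge> 0 \<Longrightarrow> stable_half_density c t x \<ge> 0"
  unfolding stable_half_density_def by auto

definition IGc :: "real \<Rightarrow> real \<Rightarrow> real \<Rightarrow> real" where
  "IGc c \<gamma> t = (\<gamma> / (c*t)) powr (-1/2) * (1 / (2 * besselK (-1/2) (\<gamma> * (c*t))))"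

definition IGk :: "real \<Rightarrow> real \<Rightarrow> real \<Rightarrow> real \<Rightarrow> real" where
  "IGk c \<gamma> t w = w powr (-3/2) * exp (- ((c*t)^2/2 / w + \<gamma>^2/2 * w))"

lemma q_IG_eq:
  "q_IG c \<gamma> t w = (if w > 0 then IGc c \<gamma> t * IGk c \<gamma> t w else 0)"
  unfolding q_IG_def f_GIG_def IGc_def IGk_def by (simp add: algebra_simps)

lemma IGc_pos:
  assumes "c > 0" "\<gamma> > 0" "t > 0"
  shows "IGc c \<gamma> t > 0"
  unfolding IGc_def using besselK_half_pos[of "\<gamma> * (c*t)"] assms by auto

lemma IGk_pos: "w > 0 \<Longrightarrow> IGk c \<gamma> t w > 0"
  unfolding IGk_def by auto

lemma q_IG_int:
  assumes "c > 0" "\<gamma> > 0" "t > 0"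
  shows "integrable lborel (\<lambda>w. w ^ k * q_IG c \<gamma> t w)"
proof -
  have eq: "(\<lambda>w. IGc c \<gamma> t * (indicator {0<..} w * (w ^ k * (w powr (-3/2) * exp (- ((c*t)^2/2 / w + \<gamma>^2/2 * w))))))
     = (\<lambda>w. w ^ k * q_IG c \<gamma> t w)"
    by (rule ext) (simp only: q_IG_eq IGk_def indicator_def, simp)
  show ?thesis unfolding eq[symmetric]
    using assms by (intro integrable_mult_right integrable_main) auto
qed

lemma q_IG_nonneg: "c > 0 \<Longrightarrow> \<gamma> > 0 \<Longrightarrow> t > 0 \<Longrightarrow> q_IG c \<gamma> t w \<ge> 0"
  using IGc_pos[of c \<gamma> t] IGk_pos[of w c \<gamma> t] by (cases "w > 0") (auto simp add: q_IG_eq)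

lemma q_IG_pos: "c > 0 \<Longrightarrow> \<gamma> > 0 \<Longrightarrow> t > 0 \<Longrightarrow> w > 0 \<Longrightarrow> q_IG c \<gamma> t w > 0"
  using IGc_pos[of c \<gamma> t] IGk_pos[of w c \<gamma> t] by (simp add: q_IG_eq)

lemma IG_moment_eq:
  assumes "c > 0" "\<gamma> > 0" "t > 0"
  shows "IG_moment c \<gamma> k t = integral\<^sup>L lborel (\<lambda>w. w ^ k * q_IG c \<gamma> t w)"
  unfolding IG_moment_def set_lebesgue_integral_def
  by (intro Bochner_Integration.integral_cong) (auto simp: q_IG_eq indicator_def)

lemma IG_moment_pos:
  assumes "c > 0" "\<gamma> > 0" "t > 0"
  shows "IG_moment c \<gamma> k t > 0"
  unfolding IG_moment_eq[OF assms]
proof (rule integral_pos_lborel[OF q_IG_int[OF assms]])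
  fix x :: real
  show "0 \<le> x ^ k * q_IG c \<gamma> t x"
    using q_IG_nonneg[OF assms, of x] by (cases "x > 0") (auto simp: q_IG_eq)
  show "0 < x \<Longrightarrow> 0 < x ^ k * q_IG c \<gamma> t x"
    using q_IG_pos[OF assms, of x] by auto
qed

lemma IG_moment_nn:
  assumes "c > 0" "\<gamma> > 0" "t > 0"
  shows "ennreal (IG_moment c \<gamma> k t) = (\<integral>\<^sup>+ w. ennreal (w ^ k * q_IG c \<gamma> t w) \<partial>lborel)"
  unfolding IG_moment_eq[OF assms]
proof (rule nn_integral_eq_integral[symmetric, OF q_IG_int[OF assms]], rule AE_I2)
  fix x :: real
  show "0 \<le> x ^ k * q_IG c \<gamma> t x"
    using q_IG_nonneg[OF assms, of x] by (cases "x > 0") (auto simp: q_IG_eq)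
qed



definition Ssum :: "real \<Rightarrow> real \<Rightarrow> real \<Rightarrow> nat \<Rightarrow> real \<Rightarrow> real" where
  "Ssum c \<gamma> \<tau> N x = (\<Sum>k=0..N. real (N choose k) * IG_moment c \<gamma> (N - k) \<tau> * x ^ k)"

definition GAc :: "real \<Rightarrow> real \<Rightarrow> real \<Rightarrow> nat \<Rightarrow> real" where
  "GAc c \<gamma> T n = (\<gamma> / (c*T)) powr (real n - 1/2) * (1 / (2 * besselK (real n - 1/2) (\<gamma> * (c*T))))"

lemma GAc_nonneg: "c > 0 \<Longrightarrow> \<gamma> > 0 \<Longrightarrow> T > 0 \<Longrightarrow> GAc c \<gamma> T n \<ge> 0"
  unfolding GAc_def using besselK_nonneg[of "real n - 1/2" "\<gamma> * (c*T)"] by auto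

lemma q_IG_measurable[measurable]: "q_IG c \<gamma> t \<in> borel_measurable borel"
proof -
  have "q_IG c \<gamma> t = (\<lambda>w. if w > 0 then IGc c \<gamma> t * IGk c \<gamma> t w else 0)"
    by (rule ext) (simp add: q_IG_eq)
  then show ?thesis unfolding IGk_def by simp
qed

lemma f_GIG_measurable[measurable]: "f_GIG lam d g \<in> borel_measurable borel"
  unfolding f_GIG_def by measurable

lemma stable_half_density_measurable[measurable]: "stable_half_density c t \<in> borel_measurable borel"
  unfolding stable_half_density_def by measurable

lemma alg_aux:
  fixes c tau T s Wp Yp E1 E2 Ey Ex Ew G I yn :: real
  assumes "c > 0" "T > 0" "s > 0" "Wp > 0" "Yp > 0" "E2 > 0" "I > 0" "Ex * Ew = Ey"
  shows "(c * tau / (s * Wp) * E1) / (c * T / (s * Yp) * E2) * (G * (yn / Yp) * (E2 * Ey))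
       = (G * tau * Ex / (T * I)) * (I * ((1 / Wp) * (E1 * Ew))) * yn"
proof -
  have "Ey = Ex * Ew" using assms by simp
  then show ?thesis using assms by (simp add: divide_simps)
qed

lemma key_pointwise:
  fixes c \<gamma> T \<tau> x y :: real
  assumes c: "c > 0" and g: "\<gamma> > 0" and T: "T > 0" and tau: "\<tau> > 0" and x: "x \<ge> 0"
  shows "stable_half_density c \<tau> (y - x) / stable_half_density c T y * f_GIG (real n - 1/2) (c * T) \<gamma> y
       = (GAc c \<gamma> T n * \<tau> * exp (- (\<gamma>^2 * x / 2)) / (T * IGc c \<gamma> \<tau>)) * q_IG c \<gamma> \<tau> (y - x) * y ^ n"
proof (cases "y - x > 0")
  case False
  then show ?thesis by (simp add: stable_half_density_def q_IG_eq)
next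
  case True
  define w where "w = y - x"
  have w: "w > 0" using True by (simp add: w_def)
  have y: "y > 0" using True x by simp
  have yw: "y = w + x" by (simp add: w_def)
  have Gpos: "IGc c \<gamma> \<tau> > 0" using IGc_pos c g tau by auto
  have p1: "y powr (real n - 1/2 - 1) = y ^ n / y powr (3/2)"
  proof -
    have "y powr (real n) * y powr (- (3/2)) = y powr (real n + - (3/2))"
      by (rule powr_add[symmetric])
    moreover have "real n + - (3/2) = real n - 1/2 - 1" by simp
    ultimately have "y powr (real n - 1/2 - 1) = y powr (real n) * y powr (- (3/2))"
      by simp
    then show ?thesis using y by (simp add: powr_realpow powr_minus_divide)
  qed
  have p2: "w powr (-3/2) = 1 / w powr (3/2)" using w by (simp add: powr_minus_divide)
  have e1: "exp (- (1/2) * ((c*T)^2 / y + \<gamma>^2 * y)) = exp (- (c^2 * T^2) / (2 * y)) * exp (- (\<gamma>^2 * y / 2))"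
    unfolding exp_add[symmetric] using y by (intro arg_cong[where f=exp]) (simp add: field_simps power_mult_distrib)
  have e2: "exp (- ((c*\<tau>)^2/2 / w + \<gamma>^2/2 * w)) = exp (- (c^2 * \<tau>^2) / (2 * w)) * exp (- (\<gamma>^2 * w / 2))"
    unfolding exp_add[symmetric] using w by (intro arg_cong[where f=exp]) (simp add: field_simps power_mult_distrib)
  have e3: "exp (- (\<gamma>^2 * x / 2)) * exp (- (\<gamma>^2 * w / 2)) = exp (- (\<gamma>^2 * y / 2))"
    unfolding exp_add[symmetric] yw by (intro arg_cong[where f=exp]) (simp add: algebra_simps)
  have lhs: "stable_half_density c \<tau> (y - x) / stable_half_density c T y * f_GIG (real n - 1/2) (c * T) \<gamma> y
     = (c * \<tau> / (sqrt (2 * pi) * w powr (3/2)) * exp (- (c^2 * \<tau>^2) / (2 * w)))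
       / (c * T / (sqrt (2 * pi) * y powr (3/2)) * exp (- (c^2 * T^2) / (2 * y)))
       * (GAc c \<gamma> T n * (y ^ n / y powr (3/2)) * (exp (- (c^2 * T^2) / (2 * y)) * exp (- (\<gamma>^2 * y / 2))))"
    using w y unfolding stable_half_density_def f_GIG_def GAc_def
    by (simp only: w_def[symmetric] p1 e1 if_True)
  have rhs: "(GAc c \<gamma> T n * \<tau> * exp (- (\<gamma>^2 * x / 2)) / (T * IGc c \<gamma> \<tau>)) * q_IG c \<gamma> \<tau> (y - x) * y ^ n
     = (GAc c \<gamma> T n * \<tau> * exp (- (\<gamma>^2 * x / 2)) / (T * IGc c \<gamma> \<tau>)) *
         (IGc c \<gamma> \<tau> * ((1 / w powr (3/2)) * (exp (- (c^2 * \<tau>^2) / (2 * w)) * exp (- (\<gamma>^2 * w / 2))))) * y ^ n"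
    using w unfolding q_IG_eq IGk_def by (simp only: w_def[symmetric] p2 e2 if_True)
  have wp: "w powr (3/2) > 0" "y powr (3/2) > 0" using w y by auto
  show ?thesis unfolding lhs rhs
    by (rule alg_aux) (use wp Gpos c T e3 in auto)
qed



lemma key_nn:
  fixes c \<gamma> T \<tau> x :: real and n j :: nat
  assumes c: "c > 0" and g: "\<gamma> > 0" and T: "T > 0" and tau: "\<tau> > 0" and x: "x \<ge> 0"
  defines "K \<equiv> GAc c \<gamma> T n * \<tau> * exp (- (\<gamma>^2 * x / 2)) / (T * IGc c \<gamma> \<tau>)"
  shows "(\<integral>\<^sup>+ y. ennreal (stable_half_density c \<tau> (y - x) / stable_half_density c T y
            * f_GIG (real n - 1/2) (c * T) \<gamma> y * y ^ j) \<partial>lborel)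
         = ennreal (K * Ssum c \<gamma> \<tau> (n + j) x)"
proof -
  define N where "N = n + j"
  let ?q = "q_IG c \<gamma> \<tau>"
  have K0: "K \<ge> 0" unfolding K_def using GAc_nonneg[OF c g T, of n] IGc_pos[OF c g tau] T tau
    by auto
  have "(\<integral>\<^sup>+ y. ennreal (stable_half_density c \<tau> (y - x) / stable_half_density c T y
            * f_GIG (real n - 1/2) (c * T) \<gamma> y * y ^ j) \<partial>lborel)
      = (\<integral>\<^sup>+ y. ennreal (K * ?q (y - x) * y ^ N) \<partial>lborel)"
  proof (intro nn_integral_cong)
    fix y :: real
    show "ennreal (stable_half_density c \<tau> (y - x) / stable_half_density c T y
            * f_GIG (real n - 1/2) (c * T) \<gamma> y * y ^ j) = ennreal (K * ?q (y - x) * y ^ N)"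
      unfolding key_pointwise[OF c g T tau x] K_def[symmetric] N_def power_add by (simp only: mult.assoc)
  qed
  also have "\<dots> = (\<integral>\<^sup>+ w. ennreal (K * ?q w * (x + w) ^ N) \<partial>lborel)"
    using nn_integral_real_affine[of "\<lambda>y. ennreal (K * ?q (y - x) * y ^ N)" 1 x] by simp
  also have "\<dots> = (\<integral>\<^sup>+ w. (\<Sum>k\<in>{0..N}. ennreal (K * real (N choose k) * x ^ k) * ennreal (w ^ (N - k) * ?q w)) \<partial>lborel)"
  proof (intro nn_integral_cong)
    fix w :: real
    have qn: "\<And>i. 0 \<le> w ^ i * ?q w"
      using q_IG_nonneg[OF c g tau, of w] by (cases "w > 0") (auto simp: q_IG_eq)
    have "K * ?q w * (x + w) ^ N = (\<Sum>k\<in>{0..N}. (K * real (N choose k) * x ^ k) * (w ^ (N - k) * ?q w))"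
      unfolding binomial_ring atLeast0AtMost sum_distrib_left
      by (intro sum.cong) (auto simp: algebra_simps)
    also have "ennreal \<dots> = (\<Sum>k\<in>{0..N}. ennreal ((K * real (N choose k) * x ^ k) * (w ^ (N - k) * ?q w)))"
      by (rule sum_ennreal[symmetric]) (use K0 x qn in auto)
    also have "\<dots> = (\<Sum>k\<in>{0..N}. ennreal (K * real (N choose k) * x ^ k) * ennreal (w ^ (N - k) * ?q w))"
      by (intro sum.cong refl ennreal_mult) (use K0 x qn in auto)
    finally show "ennreal (K * ?q w * (x + w) ^ N)
       = (\<Sum>k\<in>{0..N}. ennreal (K * real (N choose k) * x ^ k) * ennreal (w ^ (N - k) * ?q w))" .
  qed
  also have "\<dots> = (\<Sum>k\<in>{0..N}. \<integral>\<^sup>+ w. ennreal (K * real (N choose k) * x ^ k) * ennreal (w ^ (N - k) * ?q w) \<partial>lborel)"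
    by (rule nn_integral_sum) measurable
  also have "\<dots> = (\<Sum>k\<in>{0..N}. ennreal (K * real (N choose k) * x ^ k) * ennreal (IG_moment c \<gamma> (N - k) \<tau>))"
    by (intro sum.cong refl, subst nn_integral_cmult) (auto simp: IG_moment_nn[OF c g tau])
  also have "\<dots> = (\<Sum>k\<in>{0..N}. ennreal (K * real (N choose k) * x ^ k * IG_moment c \<gamma> (N - k) \<tau>))"
    by (intro sum.cong refl ennreal_mult[symmetric]) (use K0 x IG_moment_pos[OF c g tau] in \<open>auto intro: less_imp_le\<close>)
  also have "\<dots> = ennreal (\<Sum>k\<in>{0..N}. K * real (N choose k) * x ^ k * IG_moment c \<gamma> (N - k) \<tau>)"
    by (rule sum_ennreal) (use K0 x IG_moment_pos[OF c g tau, THEN less_imp_le] in \<open>auto intro!: mult_nonneg_nonneg\<close>)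
  also have "(\<Sum>k\<in>{0..N}. K * real (N choose k) * x ^ k * IG_moment c \<gamma> (N - k) \<tau>) = K * Ssum c \<gamma> \<tau> N x"
    unfolding Ssum_def sum_distrib_left by (intro sum.cong) (auto simp: algebra_simps)
  finally show ?thesis by (simp add: N_def)
qed

lemma Ssum_pos:
  assumes c: "c > 0" and g: "\<gamma> > 0" and tau: "\<tau> > 0" and x: "x \<ge> 0"
  shows "Ssum c \<gamma> \<tau> N x > 0"
proof -
  have "Ssum c \<gamma> \<tau> N x = real (N choose 0) * IG_moment c \<gamma> (N - 0) \<tau> * x ^ 0
      + (\<Sum>k\<in>{Suc 0..N}. real (N choose k) * IG_moment c \<gamma> (N - k) \<tau> * x ^ k)"
    unfolding Ssum_def by (subst sum.atLeast_Suc_atMost) auto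
  moreover have "(\<Sum>k\<in>{Suc 0..N}. real (N choose k) * IG_moment c \<gamma> (N - k) \<tau> * x ^ k) \<ge> 0"
    using IG_moment_pos[OF c g tau] x by (intro sum_nonneg mult_nonneg_nonneg) (auto intro: less_imp_le)
  moreover have "IG_moment c \<gamma> N \<tau> > 0" using IG_moment_pos[OF c g tau] .
  ultimately show ?thesis by simp
qed



interpretation lb: product_sigma_finite "\<lambda>_::nat. lborel :: real measure"
  by standard

lemma part_mono:
  fixes s :: "nat \<Rightarrow> real"
  assumes inc: "\<forall>i\<in>{1..K}. s (i - 1) < s i" and ij: "i \<le> j" and jK: "j \<le> K"
  shows "s i \<le> s j"
  using ij jK
proof (induction j)
  case 0 then show ?case by simp
next
  case (Suc j)
  show ?case
  proof (cases "i = Suc j")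
    case False
    then have "s i \<le> s j" using Suc by auto
    also have "s j < s (Suc j)" using inc Suc.prems by (metis atLeastAtMost_iff diff_Suc_1 le_add1 plus_1_eq_Suc)
    finally show ?thesis by simp
  qed simp
qed

definition rho :: "real \<Rightarrow> real \<Rightarrow> (real \<Rightarrow> real) \<Rightarrow> nat \<Rightarrow> (nat \<Rightarrow> real) \<Rightarrow> (nat \<Rightarrow> real) \<Rightarrow> real" where
  "rho c T p m s x = (\<Prod>i\<in>{1..m+1}.
                 stable_half_density c (s i - s (i - 1))
                   (x i - (if i = 1 then 0 else x (i - 1))))
               / stable_half_density c T (x (m + 1)) * p (x (m + 1))"

lemma rho_measurable[measurable]:
  assumes [measurable]: "p \<in> borel_measurable borel"
  shows "rho c T p m s \<in> borel_measurable (PiM {1..m+1} (\<lambda>_. lborel))"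
proof -
  have f: "(\<lambda>x. stable_half_density c (s i - s (i - 1)) (x i - (if i = 1 then 0 else x (i - 1))))
       \<in> borel_measurable (PiM {1..m+1} (\<lambda>_. lborel))" if i: "i \<in> {1..m+1}" for i
  proof (cases "i = 1")
    case True
    then show ?thesis using i by simp
  next
    case False
    then have i1: "i - 1 \<in> {1..m+1}" using i by auto
    show ?thesis using False i i1 by simp
  qed
  have mm: "m + 1 \<in> {1..m+1}" by simp
  show ?thesis unfolding rho_def using f mm by measurable
qed

lemma L1:
  assumes hb: "stable_half_bridge M c T p \<xi>"
    and p[measurable]: "p \<in> borel_measurable borel"
    and s: "s 0 = 0" "s (m + 1) = T" "\<forall>i\<in>{1..m+1}. s (i - 1) < s i"
    and Phi[measurable]: "Phi \<in> borel_measurable (PiM {1..m+1} (\<lambda>_. lborel))"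
  shows "(\<integral>\<^sup>+ \<omega>. Phi (\<lambda>i\<in>{1..m+1}. \<xi> (s i) \<omega>) \<partial>M)
       = (\<integral>\<^sup>+ x. ennreal (rho c T p m s x) * Phi x \<partial>PiM {1..m+1} (\<lambda>_. lborel))"
proof -
  have meas: "\<And>r. r \<in> {0..T} \<Longrightarrow> \<xi> r \<in> borel_measurable M"
    using hb unfolding stable_half_bridge_def by auto
  have sr: "\<And>i. i \<in> {1..m+1} \<Longrightarrow> s i \<in> {0..T}"
  proof -
    fix i assume i: "i \<in> {1..m+1}"
    have "s 0 \<le> s i" by (rule part_mono[OF s(3)]) (use i in auto)
    moreover have "s i \<le> s (m+1)" by (rule part_mono[OF s(3)]) (use i in auto)
    ultimately show "s i \<in> {0..T}" using s by auto
  qed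
  have mapm: "(\<lambda>\<omega>. \<lambda>i\<in>{1..m+1}. \<xi> (s i) \<omega>) \<in> measurable M (PiM {1..m+1} (\<lambda>_. lborel))"
    by (rule measurable_restrict) (use meas sr in auto)
  have eq: "distr M (PiM {1..m+1} (\<lambda>_. lborel)) (\<lambda>\<omega>. \<lambda>i\<in>{1..m+1}. \<xi> (s i) \<omega>) =
        density (PiM {1..m+1} (\<lambda>_. lborel)) (\<lambda>x. ennreal (rho c T p m s x))"
    using hb s unfolding stable_half_bridge_def rho_def by blast
  have "(\<integral>\<^sup>+ \<omega>. Phi (\<lambda>i\<in>{1..m+1}. \<xi> (s i) \<omega>) \<partial>M)
      = (\<integral>\<^sup>+ x. Phi x \<partial>distr M (PiM {1..m+1} (\<lambda>_. lborel)) (\<lambda>\<omega>. \<lambda>i\<in>{1..m+1}. \<xi> (s i) \<omega>))"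
    by (rule nn_integral_distr[symmetric, OF mapm]) (use Phi in simp)
  also have "\<dots> = (\<integral>\<^sup>+ x. ennreal (rho c T p m s x) * Phi x \<partial>PiM {1..m+1} (\<lambda>_. lborel))"
    unfolding eq
  proof (rule nn_integral_density)
    show "(\<lambda>x. ennreal (rho c T p m s x)) \<in> borel_measurable (PiM {1..m+1} (\<lambda>_. lborel))"
      using rho_measurable[OF p, of c T m s] by measurable
  qed (rule Phi)
  finally show ?thesis .
qed



lemma cor_U:
  fixes c \<gamma> T \<tau> x :: real and n :: nat
  assumes c: "c > 0" and g: "\<gamma> > 0" and T: "T > 0" and tau: "\<tau> > 0" and x: "x \<ge> 0"
  shows "(\<integral>\<^sup>+ y. ennreal (stable_half_density c \<tau> (y - x) / stable_half_density c T y
            * f_GIG (real n - 1/2) (c * T) \<gamma> y * y) \<partial>lborel)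
       = ennreal (Ssum c \<gamma> \<tau> (n+1) x / Ssum c \<gamma> \<tau> n x) *
         (\<integral>\<^sup>+ y. ennreal (stable_half_density c \<tau> (y - x) / stable_half_density c T y
            * f_GIG (real n - 1/2) (c * T) \<gamma> y) \<partial>lborel)"
proof -
  define K where "K = GAc c \<gamma> T n * \<tau> * exp (- (\<gamma>^2 * x / 2)) / (T * IGc c \<gamma> \<tau>)"
  have K0: "K \<ge> 0" unfolding K_def using GAc_nonneg[OF c g T, of n] IGc_pos[OF c g tau] T tau
    by auto
  have S0: "Ssum c \<gamma> \<tau> n x > 0" "Ssum c \<gamma> \<tau> (n+1) x > 0" using Ssum_pos[OF c g tau x] by auto
  have 1: "(\<integral>\<^sup>+ y. ennreal (stable_half_density c \<tau> (y - x) / stable_half_density c T y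
            * f_GIG (real n - 1/2) (c * T) \<gamma> y * y) \<partial>lborel) = ennreal (K * Ssum c \<gamma> \<tau> (n + 1) x)"
    using key_nn[OF c g T tau x, of n 1] by (simp add: K_def)
  have 0: "(\<integral>\<^sup>+ y. ennreal (stable_half_density c \<tau> (y - x) / stable_half_density c T y
            * f_GIG (real n - 1/2) (c * T) \<gamma> y) \<partial>lborel) = ennreal (K * Ssum c \<gamma> \<tau> n x)"
    using key_nn[OF c g T tau x, of n 0] by (simp add: K_def)
  have "ennreal (K * Ssum c \<gamma> \<tau> (n + 1) x) = ennreal (Ssum c \<gamma> \<tau> (n+1) x / Ssum c \<gamma> \<tau> n x * (K * Ssum c \<gamma> \<tau> n x))"
    using S0 by (simp add: field_simps)
  also have "\<dots> = ennreal (Ssum c \<gamma> \<tau> (n+1) x / Ssum c \<gamma> \<tau> n x) * ennreal (K * Ssum c \<gamma> \<tau> n x)"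
    using S0 K0 by (intro ennreal_mult) auto
  finally show ?thesis unfolding 1 0 .
qed

lemma G_pos:
  fixes x :: "nat \<Rightarrow> real"
  assumes c: "c > 0"
    and G: "(\<Prod>i\<in>{1..m}. stable_half_density c (s i - s (i - 1)) (x i - (if i = 1 then 0 else x (i - 1)))) \<noteq> 0"
    and m: "m \<ge> 1"
  shows "x m > 0"
proof -
  have fac: "x i - (if i = 1 then 0 else x (i - 1)) > 0" if i: "i \<in> {1..m}" for i
  proof -
    have "stable_half_density c (s i - s (i - 1)) (x i - (if i = 1 then 0 else x (i - 1))) \<noteq> 0"
      using G i by auto
    then show ?thesis unfolding stable_half_density_def by (auto split: if_splits)
  qed
  have "\<forall>i. 1 \<le> i \<longrightarrow> i \<le> m \<longrightarrow> x i > 0"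
  proof (intro allI)
    fix i show "1 \<le> i \<longrightarrow> i \<le> m \<longrightarrow> x i > 0"
    proof (induction i)
      case 0 then show ?case by simp
    next
      case (Suc i)
      show ?case
      proof (intro impI)
        assume "1 \<le> Suc i" "Suc i \<le> m"
        then have f: "x (Suc i) - (if Suc i = 1 then 0 else x i) > 0" using fac[of "Suc i"] by auto
        show "x (Suc i) > 0"
        proof (cases "i = 0")
          case True then show ?thesis using f by simp
        next
          case False
          then have "x i > 0" using Suc.IH \<open>Suc i \<le> m\<close> by auto
          then show ?thesis using f False by simp
        qed
      qed
    qed
  qed
  then show ?thesis using m by auto
qed

lemma rho_upd:
  assumes m: "m \<ge> 1"
  shows "rho c T p m s (x(m+1 := y)) =
     (\<Prod>i\<in>{1..m}. stable_half_density c (s i - s (i - 1)) (x i - (if i = 1 then 0 else x (i - 1))))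
     * (stable_half_density c (s (m+1) - s m) (y - x m) / stable_half_density c T y * p y)"
proof -
  have pr: "(\<Prod>i\<in>{1..m}. stable_half_density c (s i - s (i - 1))
              ((x(m+1 := y)) i - (if i = 1 then 0 else (x(m+1 := y)) (i - 1))))
       = (\<Prod>i\<in>{1..m}. stable_half_density c (s i - s (i - 1)) (x i - (if i = 1 then 0 else x (i - 1))))"
    by (intro prod.cong) auto
  have "rho c T p m s (x(m+1 := y)) =
     (\<Prod>i\<in>{1..m}. stable_half_density c (s i - s (i - 1))
              ((x(m+1 := y)) i - (if i = 1 then 0 else (x(m+1 := y)) (i - 1))))
     * stable_half_density c (s (m+1) - s m) (y - x m) / stable_half_density c T y * p y"
    unfolding rho_def using m by simp
  then show ?thesis unfolding pr by simp
qed



lemma sd_ennreal_mult: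
  assumes "c > 0" "\<gamma> > 0" "T > 0" "\<tau> \<ge> 0"
  shows "ennreal (stable_half_density c \<tau> (y - x) / stable_half_density c T y * f_GIG lam (c * T) \<gamma> y) * ennreal y
     = ennreal (stable_half_density c \<tau> (y - x) / stable_half_density c T y * f_GIG lam (c * T) \<gamma> y * y)"
proof (cases "y \<ge> 0")
  case True
  show ?thesis
  proof (cases "y = 0")
    case True then show ?thesis by (simp add: stable_half_density_def)
  next
    case False
    then have y: "y > 0" using True by simp
    have nn: "stable_half_density c \<tau> (y - x) / stable_half_density c T y * f_GIG lam (c * T) \<gamma> y \<ge> 0"
      using f_GIG_nonneg[of \<gamma> "c*T" lam y] assms y stable_half_density_nonneg[of c \<tau> "y - x"]
        stable_half_density_nonneg[of c T y] by (intro mult_nonneg_nonneg divide_nonneg_nonneg) auto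
    show ?thesis by (rule ennreal_mult[symmetric]) (use nn y in auto)
  qed
next
  case False
  then show ?thesis by (simp add: stable_half_density_def)
qed

lemma core_partition:
  fixes M :: "'a measure" and \<xi> :: "real \<Rightarrow> 'a \<Rightarrow> real" and s :: "nat \<Rightarrow> real"
    and B :: "nat \<Rightarrow> real set"
  assumes c: "c > 0" and g: "\<gamma> > 0" and T: "T > 0"
    and hb: "stable_half_bridge M c T (f_GIG (real n - 1/2) (c * T) \<gamma>) \<xi>"
    and s: "s 0 = 0" "s (m + 1) = T" "\<forall>i\<in>{1..m+1}. s (i - 1) < s i" "s m = t"
    and m: "m \<ge> 1"
    and B[measurable]: "\<And>i. B i \<in> sets borel"
  shows "(\<integral>\<^sup>+ \<omega>. (\<Prod>i\<in>{1..m}. indicator (B i) (\<xi> (s i) \<omega>)) * ennreal (\<xi> T \<omega>) \<partial>M)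
       = (\<integral>\<^sup>+ \<omega>. (\<Prod>i\<in>{1..m}. indicator (B i) (\<xi> (s i) \<omega>))
              * ennreal (Ssum c \<gamma> (T - t) (n+1) (\<xi> t \<omega>) / Ssum c \<gamma> (T - t) n (\<xi> t \<omega>)) \<partial>M)"
proof -
  let ?p = "f_GIG (real n - 1/2) (c * T) \<gamma>"
  let ?P = "PiM {1..m+1} (\<lambda>_. lborel :: real measure)"
  let ?U = "\<lambda>x. Ssum c \<gamma> (T - t) (n+1) x / Ssum c \<gamma> (T - t) n x"
  define Ind :: "(nat \<Rightarrow> real) \<Rightarrow> ennreal" where "Ind = (\<lambda>x. \<Prod>i\<in>{1..m}. indicator (B i) (x i))"
  define Phi1 where "Phi1 = (\<lambda>x::nat \<Rightarrow> real. Ind x * ennreal (x (m+1)))"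
  define Phi2 where "Phi2 = (\<lambda>x::nat \<Rightarrow> real. Ind x * ennreal (?U (x m)))"
  have tT: "t < T" using s(2) s(3) s(4) by (metis atLeastAtMost_iff add_diff_cancel_right' le_add2 le_refl)
  have t0: "t > 0"
  proof -
    have "s 0 < s 1" using s(3) by (metis atLeastAtMost_iff diff_self_eq_0 le_add2 le_refl)
    also have "s 1 \<le> s m" by (rule part_mono[OF s(3)]) (use m in auto)
    finally show ?thesis using s by simp
  qed
  have pm[measurable]: "?p \<in> borel_measurable borel" by simp
  have mm: "m + 1 \<in> {1..m+1}" "m \<in> {1..m+1}" using m by auto
  have Ind_m[measurable]: "Ind \<in> borel_measurable ?P"
    unfolding Ind_def by (intro borel_measurable_prod_ennreal) auto
  have U_m[measurable]: "?U \<in> borel_measurable borel" unfolding Ssum_def by measurable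
  have Phi1_m: "Phi1 \<in> borel_measurable ?P" unfolding Phi1_def using mm by measurable
  have Phi2_m: "Phi2 \<in> borel_measurable ?P" unfolding Phi2_def using mm by measurable
  have e1: "(\<integral>\<^sup>+ \<omega>. (\<Prod>i\<in>{1..m}. indicator (B i) (\<xi> (s i) \<omega>)) * ennreal (\<xi> T \<omega>) \<partial>M)
      = (\<integral>\<^sup>+ \<omega>. Phi1 (\<lambda>i\<in>{1..m+1}. \<xi> (s i) \<omega>) \<partial>M)"
    unfolding Phi1_def Ind_def using s(2) by (intro nn_integral_cong) auto
  have e2: "(\<integral>\<^sup>+ \<omega>. (\<Prod>i\<in>{1..m}. indicator (B i) (\<xi> (s i) \<omega>)) * ennreal (?U (\<xi> t \<omega>)) \<partial>M)
      = (\<integral>\<^sup>+ \<omega>. Phi2 (\<lambda>i\<in>{1..m+1}. \<xi> (s i) \<omega>) \<partial>M)"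
    unfolding Phi2_def Ind_def using s(4) m by (intro nn_integral_cong) auto
  have ins: "{1..m+1} = insert (m+1) {1..m}" by auto
  have fub: "(\<integral>\<^sup>+ x. ennreal (rho c T ?p m s x) * Phi x \<partial>?P)
     = (\<integral>\<^sup>+ x. (\<integral>\<^sup>+ y. ennreal (rho c T ?p m s (x(m+1 := y))) * Phi (x(m+1 := y)) \<partial>lborel) \<partial>PiM {1..m} (\<lambda>_. lborel))"
    if Phim: "Phi \<in> borel_measurable ?P" for Phi
  proof -
    have mes: "(\<lambda>x. ennreal (rho c T ?p m s x) * Phi x) \<in> borel_measurable (PiM (insert (m+1) {1..m}) (\<lambda>_. lborel))"
      using Phim rho_measurable[OF pm, of c T m s] unfolding ins[symmetric] by measurable
    show ?thesis unfolding ins by (rule lb.product_nn_integral_insert[OF _ _ mes]) auto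
  qed
  have inner: "(\<integral>\<^sup>+ y. ennreal (rho c T ?p m s (x(m+1 := y))) * Phi1 (x(m+1 := y)) \<partial>lborel)
        = (\<integral>\<^sup>+ y. ennreal (rho c T ?p m s (x(m+1 := y))) * Phi2 (x(m+1 := y)) \<partial>lborel)" for x
  proof -
    define G where "G = (\<Prod>i\<in>{1..m}. stable_half_density c (s i - s (i - 1)) (x i - (if i = 1 then 0 else x (i - 1))))"
    define F where "F = (\<lambda>y. stable_half_density c (T - t) (y - x m) / stable_half_density c T y * ?p y)"
    have rr: "rho c T ?p m s (x(m+1 := y)) = G * F y" for y
      unfolding rho_upd[OF m] G_def F_def using s by simp
    have I1: "Ind (x(m+1 := y)) = Ind x" for y unfolding Ind_def by (intro prod.cong) auto
    have G0: "G \<ge> 0" unfolding G_def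
      by (intro prod_nonneg stable_half_density_nonneg) (use c s(3) in \<open>auto simp: le_less\<close>)
    have F0: "F y \<ge> 0" for y unfolding F_def
      using stable_half_density_nonneg[of c "T - t" "y - x m"] stable_half_density_nonneg[of c T y]
        f_GIG_nonneg[of \<gamma> "c*T" "real n - 1/2" y] c g T tT by auto
    have Fm[measurable]: "F \<in> borel_measurable borel" unfolding F_def by measurable
    show ?thesis
    proof (cases "G = 0")
      case True
      then show ?thesis unfolding rr by simp
    next
      case False
      then have xm: "x m > 0" using G_pos[OF c _ m] unfolding G_def by blast
      have "(\<integral>\<^sup>+ y. ennreal (rho c T ?p m s (x(m+1 := y))) * Phi1 (x(m+1 := y)) \<partial>lborel)
          = (\<integral>\<^sup>+ y. (Ind x * ennreal G) * ennreal (F y * y) \<partial>lborel)"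
      proof (intro nn_integral_cong)
        fix y :: real
        have fy: "ennreal (F y) * ennreal y = ennreal (F y * y)"
          unfolding F_def by (rule sd_ennreal_mult[OF c g T]) (use tT in simp)
        then show "ennreal (rho c T ?p m s (x(m+1 := y))) * Phi1 (x(m+1 := y)) = (Ind x * ennreal G) * ennreal (F y * y)"
          unfolding Phi1_def rr I1 fy[symmetric] using G0 F0[of y] by (simp add: ennreal_mult mult_ac)
      qed
      also have "\<dots> = (Ind x * ennreal G) * (\<integral>\<^sup>+ y. ennreal (F y * y) \<partial>lborel)"
        by (rule nn_integral_cmult) measurable
      also have "(\<integral>\<^sup>+ y. ennreal (F y * y) \<partial>lborel) = ennreal (?U (x m)) * (\<integral>\<^sup>+ y. ennreal (F y) \<partial>lborel)"
        unfolding F_def by (rule cor_U[OF c g T]) (use tT xm in auto)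
      also have "(Ind x * ennreal G) * (ennreal (?U (x m)) * (\<integral>\<^sup>+ y. ennreal (F y) \<partial>lborel))
          = (Ind x * ennreal G * ennreal (?U (x m))) * (\<integral>\<^sup>+ y. ennreal (F y) \<partial>lborel)"
        by (simp add: mult_ac)
      also have "\<dots> = (\<integral>\<^sup>+ y. (Ind x * ennreal G * ennreal (?U (x m))) * ennreal (F y) \<partial>lborel)"
        by (rule nn_integral_cmult[symmetric]) measurable
      also have "\<dots> = (\<integral>\<^sup>+ y. ennreal (rho c T ?p m s (x(m+1 := y))) * Phi2 (x(m+1 := y)) \<partial>lborel)"
      proof (intro nn_integral_cong)
        fix y :: real
        have "(x(m+1 := y)) m = x m" by simp
        then show "(Ind x * ennreal G * ennreal (?U (x m))) * ennreal (F y) = ennreal (rho c T ?p m s (x(m+1 := y))) * Phi2 (x(m+1 := y))"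
          unfolding Phi2_def rr I1 using G0 F0[of y] by (simp add: ennreal_mult mult_ac)
      qed
      finally show ?thesis .
    qed
  qed
  show ?thesis
    unfolding e1 e2 L1[OF hb pm s(1,2,3) Phi1_m] L1[OF hb pm s(1,2,3) Phi2_m] fub[OF Phi1_m] fub[OF Phi2_m] inner ..
qed



lemma part0: "(\<lambda>i::nat. if i = 0 then 0 else T) 0 = 0" "(\<lambda>i::nat. if i = 0 then 0 else T) (0 + 1) = T"
  "T > 0 \<Longrightarrow> \<forall>i\<in>{1..0+1}. (\<lambda>i::nat. if i = 0 then 0 else T) (i - 1) < (\<lambda>i::nat. if i = 0 then 0 else (T::real)) i"
  by auto

lemma rho0: "rho c T p 0 (\<lambda>i::nat. if i = 0 then 0 else T) x
    = stable_half_density c T (x 1) / stable_half_density c T (x 1) * p (x 1)"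
  unfolding rho_def by simp

lemma mean_T:
  fixes M :: "'a measure" and \<xi> :: "real \<Rightarrow> 'a \<Rightarrow> real"
  assumes P: "prob_space M" and c: "c > 0" and g: "\<gamma> > 0" and T: "T > 0"
    and hb: "stable_half_bridge M c T (f_GIG (real n - 1/2) (c * T) \<gamma>) \<xi>"
  shows "(\<integral>\<^sup>+ \<omega>. ennreal (\<xi> T \<omega>) \<partial>M) = ennreal (Ssum c \<gamma> T (n+1) 0 / Ssum c \<gamma> T n 0)"
    and "AE \<omega> in M. \<xi> T \<omega> \<ge> 0"
proof -
  let ?p = "f_GIG (real n - 1/2) (c * T) \<gamma>"
  let ?s = "\<lambda>i::nat. if i = 0 then 0 else T"
  define F where "F = (\<lambda>y. stable_half_density c T y / stable_half_density c T y * ?p y)"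
  have pm: "?p \<in> borel_measurable borel" by simp
  have Fm[measurable]: "F \<in> borel_measurable borel" unfolding F_def by measurable
  have one: "{1..0+1::nat} = {1}" by auto
  have L: "(\<integral>\<^sup>+ \<omega>. f (\<xi> T \<omega>) \<partial>M) = (\<integral>\<^sup>+ y. ennreal (F y) * f y \<partial>lborel)"
    if fm[measurable]: "f \<in> borel_measurable borel" for f
  proof -
    have m1: "(\<lambda>x. f (x (1::nat))) \<in> borel_measurable (PiM {1..0+1} (\<lambda>_. lborel :: real measure))"
      by measurable
    have "(\<integral>\<^sup>+ \<omega>. f (\<xi> T \<omega>) \<partial>M) = (\<integral>\<^sup>+ \<omega>. (\<lambda>x. f (x 1)) (\<lambda>i\<in>{1..0+1}. \<xi> (?s i) \<omega>) \<partial>M)"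
      by simp
    also have "\<dots> = (\<integral>\<^sup>+ x. ennreal (rho c T ?p 0 ?s x) * f (x 1) \<partial>PiM {1..0+1} (\<lambda>_. lborel))"
      by (rule L1[OF hb pm part0(1,2) part0(3)[OF T] m1])
    also have "\<dots> = (\<integral>\<^sup>+ x. (\<lambda>y. ennreal (F y) * f y) (x (1::nat)) \<partial>PiM {1::nat} (\<lambda>_. lborel))"
      unfolding one rho0 F_def by (rule refl)
    also have "\<dots> = (\<integral>\<^sup>+ y. ennreal (F y) * f y \<partial>lborel)"
      by (rule lb.product_nn_integral_singleton) measurable
    finally show ?thesis .
  qed
  have F1: "(\<integral>\<^sup>+ y. ennreal (F y) \<partial>lborel) = 1"
    using L[of "\<lambda>_. 1"] prob_space.emeasure_space_1[OF P] by simp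
  have "(\<integral>\<^sup>+ \<omega>. ennreal (\<xi> T \<omega>) \<partial>M) = (\<integral>\<^sup>+ y. ennreal (F y) * ennreal y \<partial>lborel)"
    by (rule L) measurable
  also have "\<dots> = (\<integral>\<^sup>+ y. ennreal (stable_half_density c T (y - 0) / stable_half_density c T y * ?p y * y) \<partial>lborel)"
    unfolding F_def by (intro nn_integral_cong) (use sd_ennreal_mult[OF c g T, of T _ 0] T in simp)
  also have "\<dots> = ennreal (Ssum c \<gamma> T (n+1) 0 / Ssum c \<gamma> T n 0) *
         (\<integral>\<^sup>+ y. ennreal (stable_half_density c T (y - 0) / stable_half_density c T y * ?p y) \<partial>lborel)"
    by (rule cor_U[OF c g T T]) simp
  also have "(\<integral>\<^sup>+ y. ennreal (stable_half_density c T (y - 0) / stable_half_density c T y * ?p y) \<partial>lborel) = 1"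
    using F1 unfolding F_def by simp
  finally show "(\<integral>\<^sup>+ \<omega>. ennreal (\<xi> T \<omega>) \<partial>M) = ennreal (Ssum c \<gamma> T (n+1) 0 / Ssum c \<gamma> T n 0)" by simp
  have "(\<integral>\<^sup>+ \<omega>. ennreal (- \<xi> T \<omega>) \<partial>M) = (\<integral>\<^sup>+ y. ennreal (F y) * ennreal (- y) \<partial>lborel)"
    by (rule L) measurable
  also have "\<dots> = (\<integral>\<^sup>+ y. 0 \<partial>(lborel::real measure))"
    by (intro nn_integral_cong) (auto simp: F_def f_GIG_def ennreal_neg)
  finally have "(\<integral>\<^sup>+ \<omega>. ennreal (- \<xi> T \<omega>) \<partial>M) = 0" by simp
  moreover have "\<xi> T \<in> borel_measurable M" using hb T unfolding stable_half_bridge_def by auto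
  ultimately have "AE \<omega> in M. ennreal (- \<xi> T \<omega>) = 0"
    by (subst nn_integral_0_iff_AE[symmetric]) auto
  then show "AE \<omega> in M. \<xi> T \<omega> \<ge> 0" by (auto simp: ennreal_eq_0_iff)
qed



lemma U_nonneg_AE:
  fixes M :: "'a measure" and \<xi> :: "real \<Rightarrow> 'a \<Rightarrow> real"
  assumes c: "c > 0" and g: "\<gamma> > 0" and T: "T > 0"
    and hb: "stable_half_bridge M c T (f_GIG (real n - 1/2) (c * T) \<gamma>) \<xi>"
    and t: "0 < t" "t < T"
  shows "AE \<omega> in M. Ssum c \<gamma> (T - t) (n+1) (\<xi> t \<omega>) / Ssum c \<gamma> (T - t) n (\<xi> t \<omega>) \<ge> 0"
proof -
  let ?p = "f_GIG (real n - 1/2) (c * T) \<gamma>"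
  let ?U = "\<lambda>x. Ssum c \<gamma> (T - t) (n+1) x / Ssum c \<gamma> (T - t) n x"
  define s where "s = (\<lambda>i::nat. if i = 0 then 0 else if i = 1 then t else T)"
  have s: "s 0 = 0" "s (1 + 1) = T" "\<forall>i\<in>{1..1+1}. s (i - 1) < s i"
    using t unfolding s_def by auto
  have pm: "?p \<in> borel_measurable borel" by simp
  have U_m[measurable]: "?U \<in> borel_measurable borel" unfolding Ssum_def by measurable
  have m1: "(\<lambda>x. ennreal (- ?U (x (1::nat)))) \<in> borel_measurable (PiM {1..1+1} (\<lambda>_. lborel :: real measure))"
    by measurable
  have "(\<integral>\<^sup>+ \<omega>. ennreal (- ?U (\<xi> t \<omega>)) \<partial>M) = (\<integral>\<^sup>+ \<omega>. (\<lambda>x. ennreal (- ?U (x (1::nat)))) (\<lambda>i\<in>{1..1+1}. \<xi> (s i) \<omega>) \<partial>M)"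
    by (simp add: s_def)
  also have "\<dots> = (\<integral>\<^sup>+ x. ennreal (rho c T ?p 1 s x) * ennreal (- ?U (x 1)) \<partial>PiM {1..1+1} (\<lambda>_. lborel))"
    by (rule L1[OF hb pm s m1])
  also have "\<dots> = (\<integral>\<^sup>+ x. 0 \<partial>PiM {1..1+1::nat} (\<lambda>_. lborel :: real measure))"
  proof (intro nn_integral_cong)
    fix x :: "nat \<Rightarrow> real"
    show "ennreal (rho c T ?p 1 s x) * ennreal (- ?U (x 1)) = 0"
    proof (cases "x 1 > 0")
      case True
      have "?U (x 1) > 0" using Ssum_pos[OF c g _ True[THEN less_imp_le], of "T - t"] t by simp
      then show ?thesis by (simp add: ennreal_neg)
    next
      case False
      have "rho c T ?p 1 s x = 0"
        unfolding rho_def using False by (simp add: s_def stable_half_density_def)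
      then show ?thesis by simp
    qed
  qed
  finally have "(\<integral>\<^sup>+ \<omega>. ennreal (- ?U (\<xi> t \<omega>)) \<partial>M) = 0" by simp
  moreover have xm[measurable]: "\<xi> t \<in> borel_measurable M" using hb t unfolding stable_half_bridge_def by auto
  have "(\<lambda>\<omega>. ennreal (- ?U (\<xi> t \<omega>))) \<in> borel_measurable M" by measurable
  ultimately have "AE \<omega> in M. ennreal (- ?U (\<xi> t \<omega>)) = 0"
    by (subst nn_integral_0_iff_AE[symmetric])
  then show ?thesis by (auto simp: ennreal_eq_0_iff)
qed

lemma prod_indicator_ennreal:
  assumes "finite I"
  shows "(\<Prod>i\<in>I. (indicator (C i) (y i) :: ennreal)) = (if \<forall>i\<in>I. y i \<in> C i then 1 else 0)"
  using assms by (induction I rule: finite_induct) (auto simp: indicator_def)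



lemma basic_set:
  fixes M :: "'a measure" and \<xi> :: "real \<Rightarrow> 'a \<Rightarrow> real" and B :: "real \<Rightarrow> real set"
  assumes P: "prob_space M" and c: "c > 0" and g: "\<gamma> > 0" and T: "T > 0"
    and hb: "stable_half_bridge M c T (f_GIG (real n - 1/2) (c * T) \<gamma>) \<xi>"
    and t: "0 \<le> t" "t < T"
    and J: "finite J" "J \<subseteq> {0..t}"
    and B: "\<And>j. B j \<in> sets borel"
  shows "(\<integral>\<^sup>+ \<omega>. indicator {\<omega>\<in>space M. \<forall>j\<in>J. \<xi> j \<omega> \<in> B j} \<omega> * ennreal (\<xi> T \<omega>) \<partial>M)
       = (\<integral>\<^sup>+ \<omega>. indicator {\<omega>\<in>space M. \<forall>j\<in>J. \<xi> j \<omega> \<in> B j} \<omega>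
            * ennreal (Ssum c \<gamma> (T - t) (n+1) (\<xi> t \<omega>) / Ssum c \<gamma> (T - t) n (\<xi> t \<omega>)) \<partial>M)"
proof -
  let ?U = "\<lambda>x. Ssum c \<gamma> (T - t) (n+1) x / Ssum c \<gamma> (T - t) n x"
  define A where "A = {\<omega>\<in>space M. \<forall>j\<in>J. \<xi> j \<omega> \<in> B j}"
  define J0 where "J0 = J - {0}"
  define A0 where "A0 = {\<omega>\<in>space M. \<forall>j\<in>J0. \<xi> j \<omega> \<in> B j}"
  define cst :: ennreal where "cst = (if 0 \<in> J \<and> 0 \<notin> B 0 then 0 else 1)"
  have xm: "\<And>r. r \<in> {0..T} \<Longrightarrow> \<xi> r \<in> borel_measurable M"
    using hb unfolding stable_half_bridge_def by auto
  have xmt[measurable]: "\<xi> t \<in> borel_measurable M" "\<xi> T \<in> borel_measurable M" using xm t T by auto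
  have AE0: "AE \<omega> in M. \<xi> 0 \<omega> = 0" using hb unfolding stable_half_bridge_def by auto
  have U_m[measurable]: "?U \<in> borel_measurable borel" unfolding Ssum_def by measurable
  have J0sub: "J0 \<subseteq> {0<..t}" "finite J0" using J unfolding J0_def by auto
  have A0m: "A0 \<in> sets M" unfolding A0_def
  proof (rule sets.sets_Collect_finite_All[OF _ J0sub(2)])
    fix j assume "j \<in> J0"
    then have "\<xi> j \<in> borel_measurable M" using J0sub t by (intro xm) auto
    then show "{x \<in> space M. \<xi> j x \<in> B j} \<in> sets M" using B[of j] by measurable
  qed
  have indAE: "AE \<omega> in M. indicator A \<omega> = cst * indicator A0 \<omega>"
    using AE0 by eventually_elim (auto simp: indicator_def cst_def A_def A0_def J0_def; metis)
  have Q: "(\<integral>\<^sup>+ \<omega>. indicator A0 \<omega> * ennreal (\<xi> T \<omega>) \<partial>M)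
       = (\<integral>\<^sup>+ \<omega>. indicator A0 \<omega> * ennreal (?U (\<xi> t \<omega>)) \<partial>M)"
  proof (cases "t = 0")
    case True
    then have "J0 = {}" using J0sub by auto
    then have A0s: "A0 = space M" unfolding A0_def by simp
    have "(\<integral>\<^sup>+ \<omega>. indicator A0 \<omega> * ennreal (\<xi> T \<omega>) \<partial>M) = (\<integral>\<^sup>+ \<omega>. ennreal (\<xi> T \<omega>) \<partial>M)"
      unfolding A0s by (intro nn_integral_cong) simp
    also have "\<dots> = ennreal (Ssum c \<gamma> T (n+1) 0 / Ssum c \<gamma> T n 0)"
      by (rule mean_T(1)[OF P c g T hb])
    also have "\<dots> = (\<integral>\<^sup>+ \<omega>. ennreal (?U 0) \<partial>M)"
      using True prob_space.emeasure_space_1[OF P] by simp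
    also have "\<dots> = (\<integral>\<^sup>+ \<omega>. indicator A0 \<omega> * ennreal (?U (\<xi> t \<omega>)) \<partial>M)"
      unfolding A0s using AE0 True by (intro nn_integral_cong_AE) auto
    finally show ?thesis .
  next
    case False
    then have t0: "t > 0" using t by simp
    define J1 where "J1 = insert t J0"
    define B1 where "B1 = (\<lambda>j. if j \<in> J0 then B j else UNIV)"
    have J1: "finite J1" "J1 \<subseteq> {0<..t}" "t \<in> J1" using J0sub t0 unfolding J1_def by auto
    have A0': "A0 = {\<omega>\<in>space M. \<forall>j\<in>J1. \<xi> j \<omega> \<in> B1 j}"
      unfolding A0_def J1_def B1_def by auto
    define L where "L = sorted_list_of_set J1"
    define m where "m = length L"
    have L: "sorted_wrt (<) L" "set L = J1" "m = card J1" using J1 unfolding L_def m_def by auto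
    have m1: "m \<ge> 1" using L J1 by (metis One_nat_def Suc_leI card_gt_0_iff empty_iff)
    have Lel: "0 < L ! k \<and> L ! k \<le> t" if "k < m" for k
      using that L J1 nth_mem[of k L] unfolding m_def by auto
    have Llast: "L ! (m - 1) = t"
    proof -
      obtain k where k: "k < m" "L ! k = t" using L(2) J1(3) by (metis in_set_conv_nth m_def)
      show ?thesis
      proof (cases "k = m - 1")
        case True then show ?thesis using k by simp
      next
        case False
        then have "k < m - 1" using k by simp
        then have "L ! k < L ! (m - 1)" using sorted_wrt_nth_less[OF L(1), of k "m - 1"] m1 unfolding m_def by auto
        then show ?thesis using k Lel[of "m - 1"] m1 by simp
      qed
    qed
    define s where "s = (\<lambda>i. if i = 0 then 0 else if i \<le> m then L ! (i - 1) else T)"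
    have s0: "s 0 = 0" "s (m + 1) = T" "s m = t" using m1 Llast unfolding s_def by auto
    have sinc: "\<forall>i\<in>{1..m+1}. s (i - 1) < s i"
    proof
      fix i assume i: "i \<in> {1..m+1}"
      show "s (i - 1) < s i"
      proof (cases "i = 1")
        case True then show ?thesis using Lel[of 0] m1 unfolding s_def by simp
      next
        case False
        show ?thesis
        proof (cases "i = m + 1")
          case True then show ?thesis using s0 t by simp
        next
          case False
          then have "2 \<le> i" "i \<le> m" using i \<open>i \<noteq> 1\<close> by auto
          then have "L ! (i - 2) < L ! (i - 1)" using sorted_wrt_nth_less[OF L(1), of "i - 2" "i - 1"] unfolding m_def by auto
          moreover have "s (i - 1) = L ! (i - 2)" "s i = L ! (i - 1)"
            using \<open>2 \<le> i\<close> \<open>i \<le> m\<close> unfolding s_def by (auto simp: numeral_2_eq_2)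
          ultimately show ?thesis by simp
        qed
      qed
    qed
    have img: "(\<forall>i\<in>{1..m}. \<xi> (s i) \<omega> \<in> B1 (s i)) \<longleftrightarrow> (\<forall>j\<in>J1. \<xi> j \<omega> \<in> B1 j)" for \<omega>
    proof
      assume H: "\<forall>i\<in>{1..m}. \<xi> (s i) \<omega> \<in> B1 (s i)"
      show "\<forall>j\<in>J1. \<xi> j \<omega> \<in> B1 j"
      proof
        fix j assume "j \<in> J1"
        then obtain k where k: "k < m" "L ! k = j" using L(2) by (metis in_set_conv_nth m_def)
        have "s (k + 1) = j" using k unfolding s_def by simp
        moreover have "k + 1 \<in> {1..m}" using k by simp
        ultimately have "\<xi> (s (k+1)) \<omega> \<in> B1 (s (k+1))" using H by blast
        then show "\<xi> j \<omega> \<in> B1 j" using \<open>s (k + 1) = j\<close> by simp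
      qed
    next
      assume H: "\<forall>j\<in>J1. \<xi> j \<omega> \<in> B1 j"
      show "\<forall>i\<in>{1..m}. \<xi> (s i) \<omega> \<in> B1 (s i)"
      proof
        fix i assume i: "i \<in> {1..m}"
        then have "s i \<in> J1" using L(2) nth_mem[of "i - 1" L] unfolding s_def m_def by auto
        then show "\<xi> (s i) \<omega> \<in> B1 (s i)" using H by auto
      qed
    qed
    have indeq: "(indicator A0 \<omega> :: ennreal) = (\<Prod>i\<in>{1..m}. indicator (B1 (s i)) (\<xi> (s i) \<omega>))" if "\<omega> \<in> space M" for \<omega>
    proof -
      have "indicator A0 \<omega> = (if \<forall>j\<in>J1. \<xi> j \<omega> \<in> B1 j then 1 else (0::ennreal))"
        using that unfolding A0' by (simp add: indicator_def)
      also have "\<dots> = (if \<forall>i\<in>{1..m}. \<xi> (s i) \<omega> \<in> B1 (s i) then 1 else 0)" by (simp only: img)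
      also have "\<dots> = (\<Prod>i\<in>{1..m}. indicator (B1 (s i)) (\<xi> (s i) \<omega>))"
        by (rule prod_indicator_ennreal[symmetric]) simp
      finally show ?thesis .
    qed
    have B1m: "\<And>i. B1 (s i) \<in> sets borel" unfolding B1_def using B by auto
    have "(\<integral>\<^sup>+ \<omega>. indicator A0 \<omega> * ennreal (\<xi> T \<omega>) \<partial>M)
        = (\<integral>\<^sup>+ \<omega>. (\<Prod>i\<in>{1..m}. indicator (B1 (s i)) (\<xi> (s i) \<omega>)) * ennreal (\<xi> T \<omega>) \<partial>M)"
      by (intro nn_integral_cong) (simp add: indeq)
    also have "\<dots> = (\<integral>\<^sup>+ \<omega>. (\<Prod>i\<in>{1..m}. indicator (B1 (s i)) (\<xi> (s i) \<omega>)) * ennreal (?U (\<xi> t \<omega>)) \<partial>M)"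
      by (rule core_partition[OF c g T hb s0(1,2) sinc s0(3) m1 B1m])
    also have "\<dots> = (\<integral>\<^sup>+ \<omega>. indicator A0 \<omega> * ennreal (?U (\<xi> t \<omega>)) \<partial>M)"
      by (intro nn_integral_cong) (simp add: indeq)
    finally show ?thesis .
  qed
  have "(\<integral>\<^sup>+ \<omega>. indicator A \<omega> * ennreal (\<xi> T \<omega>) \<partial>M) = (\<integral>\<^sup>+ \<omega>. cst * (indicator A0 \<omega> * ennreal (\<xi> T \<omega>)) \<partial>M)"
    using indAE by (intro nn_integral_cong_AE) (auto simp: mult.assoc)
  also have "\<dots> = cst * (\<integral>\<^sup>+ \<omega>. indicator A0 \<omega> * ennreal (\<xi> T \<omega>) \<partial>M)"
    by (rule nn_integral_cmult) (use A0m in measurable)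
  also have "\<dots> = cst * (\<integral>\<^sup>+ \<omega>. indicator A0 \<omega> * ennreal (?U (\<xi> t \<omega>)) \<partial>M)" unfolding Q ..
  also have "\<dots> = (\<integral>\<^sup>+ \<omega>. cst * (indicator A0 \<omega> * ennreal (?U (\<xi> t \<omega>))) \<partial>M)"
    by (rule nn_integral_cmult[symmetric]) (use A0m in measurable)
  also have "\<dots> = (\<integral>\<^sup>+ \<omega>. indicator A \<omega> * ennreal (?U (\<xi> t \<omega>)) \<partial>M)"
    using indAE by (intro nn_integral_cong_AE) (auto simp: mult.assoc)
  finally show ?thesis unfolding A_def .
qed



theorem mainTheorem5:
  fixes M :: "'a measure" and \<xi> :: "real \<Rightarrow> 'a \<Rightarrow> real"
    and c \<gamma> T t :: real and n :: nat
  assumes "prob_space M"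
    and "c > 0" and "\<gamma> > 0" and "T > 0" and "n \<ge> 1"
    and "stable_half_bridge M c T (f_GIG (real n - 1/2) (c * T) \<gamma>) \<xi>"
    and "0 \<le> t" and "t < T"
  shows "AE \<omega> in M.
           real_cond_exp M (natural_filtration M \<xi> t) (\<xi> T) \<omega> =
             (\<Sum>k=0..n+1. real ((n+1) choose k) * IG_moment c \<gamma> (n + 1 - k) (T - t) * \<xi> t \<omega> ^ k)
           / (\<Sum>k=0..n. real (n choose k) * IG_moment c \<gamma> (n - k) (T - t) * \<xi> t \<omega> ^ k)"
proof -
  note P = assms(1) and c = assms(2) and g = assms(3) and T = assms(4) and hb = assms(6)
    and t = assms(7,8)
  interpret prob_space M by (rule P)
  let ?U = "\<lambda>x. Ssum c \<gamma> (T - t) (n+1) x / Ssum c \<gamma> (T - t) n x"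
  define F where "F = natural_filtration M \<xi> t"
  define G0 where "G0 = {\<xi> s -` A \<inter> space M | s A. s \<in> {0..t} \<and> A \<in> sets borel}"
  have xm: "\<And>r. r \<in> {0..T} \<Longrightarrow> \<xi> r \<in> borel_measurable M"
    using hb unfolding stable_half_bridge_def by auto
  have xmt[measurable]: "\<xi> t \<in> borel_measurable M" "\<xi> T \<in> borel_measurable M" using xm t T by auto
  have AE0: "AE \<omega> in M. \<xi> 0 \<omega> = 0" using hb unfolding stable_half_bridge_def by auto
  have U_m[measurable]: "?U \<in> borel_measurable borel" unfolding Ssum_def by measurable
  have G0pow: "G0 \<subseteq> Pow (space M)" unfolding G0_def by auto
  have G0M: "G0 \<subseteq> sets M" unfolding G0_def using xm t by (auto intro!: measurable_sets)
  have Fsp: "space F = space M" unfolding F_def natural_filtration_def G0_def[symmetric]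
    by (rule space_measure_of_conv)
  have Fsets: "sets F = sigma_sets (space M) G0"
    unfolding F_def natural_filtration_def G0_def[symmetric] using G0pow by (simp add: sets_measure_of_conv)
  have subalg: "subalgebra M F"
    unfolding subalgebra_def Fsp Fsets using sets.sigma_sets_subset[OF G0M] by simp
  have xiF: "\<xi> r \<in> borel_measurable F" if r: "r \<in> {0..t}" for r
  proof (rule measurableI)
    fix A :: "real set" assume "A \<in> sets borel"
    then have "\<xi> r -` A \<inter> space M \<in> G0" unfolding G0_def using r by blast
    then show "\<xi> r -` A \<inter> space F \<in> sets F" unfolding Fsp Fsets by auto
  qed simp
  define G where "G = {{\<omega>\<in>space M. \<forall>j\<in>J. \<xi> j \<omega> \<in> B j} | J B. finite J \<and> J \<subseteq> {0..t} \<and> (\<forall>j. B j \<in> sets borel)}"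
  have GF: "G \<subseteq> sets F"
  proof
    fix A assume "A \<in> G"
    then obtain J B where A: "A = {\<omega>\<in>space M. \<forall>j\<in>J. \<xi> j \<omega> \<in> B j}" and J: "finite J" "J \<subseteq> {0..t}"
      and B: "\<forall>j. B j \<in> sets borel" unfolding G_def by blast
    have "{\<omega>\<in>space F. \<forall>j\<in>J. \<xi> j \<omega> \<in> B j} \<in> sets F"
    proof (rule sets.sets_Collect_finite_All[OF _ J(1)])
      fix j assume "j \<in> J"
      then have "\<xi> j \<in> borel_measurable F" using J by (intro xiF) auto
      then show "{x \<in> space F. \<xi> j x \<in> B j} \<in> sets F" using B by measurable
    qed
    then show "A \<in> sets F" unfolding A Fsp .
  qed
  have G0G: "G0 \<subseteq> G"
  proof
    fix A assume "A \<in> G0"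
    then obtain s A' where A: "A = \<xi> s -` A' \<inter> space M" "s \<in> {0..t}" "A' \<in> sets borel"
      unfolding G0_def by blast
    have "A = {\<omega>\<in>space M. \<forall>j\<in>{s}. \<xi> j \<omega> \<in> (\<lambda>_. A') j}" using A by auto
    then show "A \<in> G" unfolding G_def
      by (intro CollectI exI[of _ "{s}"] exI[of _ "\<lambda>_. A'"]) (use A in auto)
  qed
  have sigG: "sigma_sets (space M) G = sets F"
  proof
    show "sigma_sets (space M) G \<subseteq> sets F" unfolding Fsets
      by (rule sigma_sets_mono) (use GF Fsets in auto)
    show "sets F \<subseteq> sigma_sets (space M) G" unfolding Fsets by (rule sigma_sets_mono'[OF G0G])
  qed
  have Gpow: "G \<subseteq> Pow (space M)" unfolding G_def by auto
  have Gint: "Int_stable G"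
    unfolding Int_stable_def
  proof (intro ballI)
    fix a b assume "a \<in> G" "b \<in> G"
    then obtain J1 B1 J2 B2 where a: "a = {\<omega>\<in>space M. \<forall>j\<in>J1. \<xi> j \<omega> \<in> B1 j}" "finite J1" "J1 \<subseteq> {0..t}" "\<forall>j. B1 j \<in> sets borel"
      and b: "b = {\<omega>\<in>space M. \<forall>j\<in>J2. \<xi> j \<omega> \<in> B2 j}" "finite J2" "J2 \<subseteq> {0..t}" "\<forall>j. B2 j \<in> sets borel"
      unfolding G_def by blast
    define B where "B = (\<lambda>j. (if j \<in> J1 then B1 j else UNIV) \<inter> (if j \<in> J2 then B2 j else UNIV))"
    have "a \<inter> b = {\<omega>\<in>space M. \<forall>j\<in>J1 \<union> J2. \<xi> j \<omega> \<in> B j}" unfolding a b B_def by auto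
    moreover have "\<forall>j. B j \<in> sets borel" unfolding B_def using a b by auto
    ultimately show "a \<inter> b \<in> G" unfolding G_def
      by (intro CollectI exI[of _ "J1 \<union> J2"] exI[of _ B]) (use a b in auto)
  qed
  define f1 where "f1 = (\<lambda>\<omega>. ennreal (\<xi> T \<omega>))"
  define f2 where "f2 = (\<lambda>\<omega>. ennreal (?U (\<xi> t \<omega>)))"
  have f1m[measurable]: "f1 \<in> borel_measurable M" unfolding f1_def by measurable
  have f2m[measurable]: "f2 \<in> borel_measurable M" unfolding f2_def by measurable
  have basicG: "emeasure (density M f1) A = emeasure (density M f2) A" if A: "A \<in> G" for A
  proof -
    obtain J B where AJ: "A = {\<omega>\<in>space M. \<forall>j\<in>J. \<xi> j \<omega> \<in> B j}" and J: "finite J" "J \<subseteq> {0..t}"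
      and B: "\<forall>j. B j \<in> sets borel" using A unfolding G_def by blast
    have AM: "A \<in> sets M" using A GF subalg unfolding subalgebra_def by auto
    have "emeasure (density M f1) A = (\<integral>\<^sup>+ \<omega>. indicator A \<omega> * ennreal (\<xi> T \<omega>) \<partial>M)"
      using AM by (simp add: emeasure_density f1_def mult.commute)
    also have "\<dots> = (\<integral>\<^sup>+ \<omega>. indicator A \<omega> * ennreal (?U (\<xi> t \<omega>)) \<partial>M)"
      unfolding AJ by (rule basic_set[OF P c g T hb t J]) (use B in auto)
    also have "\<dots> = emeasure (density M f2) A"
      by (subst emeasure_density[OF f2m AM]) (simp add: f2_def mult.commute)
    finally show ?thesis .
  qed
  have spG: "space M \<in> G" unfolding G_def by (rule CollectI, rule exI[of _ "{}"]) auto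
  have fin1: "emeasure (density M f1) (space M) < \<infinity>"
    using mean_T(1)[OF P c g T hb] by (simp add: emeasure_density f1_def)
  have eqF: "emeasure (density M f1) A = emeasure (density M f2) A" if A: "A \<in> sets F" for A
  proof -
    have "A \<in> sigma_sets (space M) G" using A sigG by simp
    from Gint Gpow this show ?thesis
    proof (induction rule: sigma_sets_induct_disjoint)
      case (basic A) then show ?case by (rule basicG)
    next
      case empty then show ?case by simp
    next
      case (compl A)
      have AM: "A \<in> sets M" using compl.hyps sigG subalg unfolding subalgebra_def by auto
      have le1: "emeasure (density M f1) A \<le> emeasure (density M f1) (space M)"
        by (rule emeasure_mono) (use AM sets.sets_into_space[OF AM] in auto)
      have le2: "emeasure (density M f2) A \<le> emeasure (density M f2) (space M)"
        by (rule emeasure_mono) (use AM sets.sets_into_space[OF AM] in auto)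
      have "emeasure (density M f1) (space M - A) = emeasure (density M f1) (space M) - emeasure (density M f1) A"
        using AM fin1 sets.sets_into_space[OF AM] le1
        by (intro emeasure_Diff) auto
      also have "\<dots> = emeasure (density M f2) (space M) - emeasure (density M f2) A"
        using basicG[OF spG] compl.IH by simp
      also have "\<dots> = emeasure (density M f2) (space M - A)"
        using AM fin1 basicG[OF spG] sets.sets_into_space[OF AM] le2
        by (intro emeasure_Diff[symmetric]) auto
      finally show ?case .
    next
      case (union A)
      have AM: "range A \<subseteq> sets M" using union.hyps(2) sigG subalg unfolding subalgebra_def by auto
      have "emeasure (density M f1) (\<Union>i. A i) = (\<Sum>i. emeasure (density M f1) (A i))"
        using AM union.hyps(1) by (intro suminf_emeasure[symmetric]) auto
      also have "\<dots> = (\<Sum>i. emeasure (density M f2) (A i))" using union.IH by simp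
      also have "\<dots> = emeasure (density M f2) (\<Union>i. A i)"
        using AM union.hyps(1) by (intro suminf_emeasure) auto
      finally show ?case .
    qed
  qed
  have nn1: "AE \<omega> in M. \<xi> T \<omega> \<ge> 0" by (rule mean_T(2)[OF P c g T hb])
  have nn2: "AE \<omega> in M. ?U (\<xi> t \<omega>) \<ge> 0"
  proof (cases "t = 0")
    case True
    have "?U 0 > 0" using Ssum_pos[OF c g, of "T - t" 0] t by (simp add: True T)
    then show ?thesis using AE0 True by (auto elim: AE_mp)
  next
    case False
    then show ?thesis using U_nonneg_AE[OF c g T hb] t by simp
  qed
  have int1: "integrable M (\<xi> T)"
    using mean_T(1)[OF P c g T hb] nn1 by (intro integrableI_nonneg) auto
  have int2: "integrable M (\<lambda>\<omega>. ?U (\<xi> t \<omega>))"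
  proof (intro integrableI_nonneg)
    show "(\<lambda>\<omega>. ?U (\<xi> t \<omega>)) \<in> borel_measurable M" by measurable
    show "AE \<omega> in M. 0 \<le> ?U (\<xi> t \<omega>)" by (rule nn2)
    have "(\<integral>\<^sup>+ \<omega>. ennreal (?U (\<xi> t \<omega>)) \<partial>M) = emeasure (density M f2) (space M)"
      by (subst emeasure_density[OF f2m sets.top]) (simp add: f2_def)
    also have "\<dots> = emeasure (density M f1) (space M)" using basicG[OF spG] by simp
    finally show "(\<integral>\<^sup>+ \<omega>. ennreal (?U (\<xi> t \<omega>)) \<partial>M) < \<infinity>" using fin1 by simp
  qed
  interpret FS: finite_measure_subalgebra M F by unfold_locales (rule subalg)
  have gF: "(\<lambda>\<omega>. ?U (\<xi> t \<omega>)) \<in> borel_measurable F"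
    by (rule measurable_compose[OF xiF[of t] U_m]) (use t in simp)
  have conv: "(\<integral>\<omega>\<in>A. h \<omega> \<partial>M) = enn2real (emeasure (density M (\<lambda>\<omega>. ennreal (h \<omega>))) A)"
    if A: "A \<in> sets M" and hm[measurable]: "h \<in> borel_measurable M" and hn: "AE \<omega> in M. h \<omega> \<ge> 0" for A h
  proof -
    have "(\<integral>\<omega>\<in>A. h \<omega> \<partial>M) = integral\<^sup>L M (\<lambda>\<omega>. indicator A \<omega> * h \<omega>)"
      unfolding set_lebesgue_integral_def by simp
    also have "\<dots> = enn2real (\<integral>\<^sup>+ \<omega>. ennreal (indicator A \<omega> * h \<omega>) \<partial>M)"
      using A hn by (intro integral_eq_nn_integral) (measurable, auto simp: indicator_def)
    also have "(\<integral>\<^sup>+ \<omega>. ennreal (indicator A \<omega> * h \<omega>) \<partial>M) = emeasure (density M (\<lambda>\<omega>. ennreal (h \<omega>))) A"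
      using A by (simp add: emeasure_density) (intro nn_integral_cong, simp add: indicator_def)
    finally show ?thesis .
  qed
  have "AE \<omega> in M. real_cond_exp M F (\<xi> T) \<omega> = ?U (\<xi> t \<omega>)"
  proof (rule FS.real_cond_exp_charact)
    fix A assume A: "A \<in> sets F"
    then have AM: "A \<in> sets M" using subalg unfolding subalgebra_def by auto
    show "(\<integral>\<omega>\<in>A. \<xi> T \<omega> \<partial>M) = (\<integral>\<omega>\<in>A. ?U (\<xi> t \<omega>) \<partial>M)"
    proof -
      have gM: "(\<lambda>\<omega>. ?U (\<xi> t \<omega>)) \<in> borel_measurable M" by measurable
      have e1: "(\<integral>\<omega>\<in>A. \<xi> T \<omega> \<partial>M) = enn2real (emeasure (density M f1) A)"
        using conv[OF AM xmt(2) nn1] by (simp add: f1_def)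
      have e2: "(\<integral>\<omega>\<in>A. ?U (\<xi> t \<omega>) \<partial>M) = enn2real (emeasure (density M f2) A)"
        using conv[OF AM gM nn2] by (simp add: f2_def)
      show ?thesis by (simp only: e1 e2 eqF[OF A])
    qed
  qed (use int1 int2 gF in auto)
  then show ?thesis unfolding F_def Ssum_def .
qed

end
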